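(* Let $h_1',h_2',\dots$ be independent and uniformly distributed on $\mathcal{F}^d$, and let $h_i:=h_i'\circ\psi^{-1}$ (tasks on $\mathcal{X}$). Let $\Phi,\Phi':\{-1,1\}^m\to\mathcal{Z}$ be two fixed representations such that $T:=\Phi\circ\psi$ and $T':=\Phi'\circ\psi$ are bijections of $\mathcal{Z}$. For each $i$ let $g_i,g_i':\mathcal{Z}\to\mathbb{R}$ be the (unique) functions with $g_i\circ\Phi\in\mathcal{H}(h_i)$ and $g_i'\circ\Phi'\in\mathcal{H}(h_i)$, and set $g=(g_1,\dots,g_n)$, $g'=(g_1',\dots,g_n')$. Then, almost surely, $$\lim_{n\to\infty}\frac1n\Big(\widehat{\deg}(g\circ\Phi)-\widehat{\deg}(g'\circ\Phi')\Big)=0,$$ where $\widehat{\deg}(g\circ\Phi)=\sum_{i=1}^n\deg(g_i)+\sum_{j=1}^d\deg(\Phi_j)$ and similarly for $g'\circ\Phi'$.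
   Context: Standing setup: integers $m\ge d\ge 1$, $\mathcal{Z}=\{-1,1\}^d$, $\psi:\mathcal{Z}\to\{-1,1\}^m$ injective, $\mathcal{X}:=\psi(\mathcal{Z})$, latent distribution with full support on $\mathcal{Z}$. For $f:\{-1,1\}^n\to\mathbb{R}$ with Fourier–Walsh expansion $f=\sum_{S\subseteq[n]}\hat f(S)\chi_S$, $\chi_S(x)=\prod_{i\in S}x_i$, $\deg(f)=\max\{|S|:\hat f(S)\ne0\}$ (0 for constants). Tasks are functions on $\mathcal{X}$ (extended arbitrarily to $\{-1,1\}^m$); $\mathcal{H}(h)$ is the set of $f:\{-1,1\}^m\to\mathbb{R}$ agreeing with $h$ on $\mathcal{X}$. Finite-precision convention: fix a finite set $V\subset\mathbb{R}$ with $\{-1,1\}\subseteq V$ and let $\mathcal{F}^d$ be the (finite) set of all functions $\{-1,1\}^d\to V$. *)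

theory Defs
  imports "HOL-Probability.Probability"
begin

definition cube :: "nat \<Rightarrow> int list set" where
  "cube n = {xs. length xs = n \<and> set xs \<subseteq> {-1, 1}}"

definition chi :: "nat set \<Rightarrow> int list \<Rightarrow> real" where
  "chi S x = (\<Prod>i\<in>S. real_of_int (x ! i))"

definition fourier :: "nat \<Rightarrow> (int list \<Rightarrow> real) \<Rightarrow> nat set \<Rightarrow> real" where
  "fourier n f S = (\<Sum>x\<in>cube n. f x * chi S x) / 2 ^ n"

text \<open>Degree of f as a function on {-1,1}^n (0 for constant / zero functions).\<close>
definition deg :: "nat \<Rightarrow> (int list \<Rightarrow> real) \<Rightarrow> nat" where
  "deg n f = Max (insert 0 (card ` {S. S \<subseteq> {..<n} \<and> fourier n f S \<noteq> 0}))"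

text \<open>The finite set F^d of functions {-1,1}^d -> V, each represented by its
canonical extension that is 0 outside the cube.\<close>
definition Fset :: "real set \<Rightarrow> nat \<Rightarrow> (int list \<Rightarrow> real) set" where
  "Fset V d = {f. (\<forall>x\<in>cube d. f x \<in> V) \<and> (\<forall>x. x \<notin> cube d \<longrightarrow> f x = 0)}"

definition Hset :: "nat \<Rightarrow> int list set \<Rightarrow> (int list \<Rightarrow> real) \<Rightarrow> (int list \<Rightarrow> real) set" where
  "Hset m X h = {f. \<forall>x\<in>X. f x = h x}"

definition degsum ::
  "nat \<Rightarrow> nat \<Rightarrow> (int list \<Rightarrow> int list) \<Rightarrow> (nat \<Rightarrow> int list \<Rightarrow> real) \<Rightarrow> nat \<Rightarrow> nat" where
  "degsum d m Phi g n = (\<Sum>i<n. deg d (g i)) + (\<Sum>j<d. deg m (\<lambda>x. real_of_int (Phi x ! j)))"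

end

theory Submission imports Defs begin

lemma (in prob_space) slln_bounded:
  fixes X :: "nat \<Rightarrow> 'a \<Rightarrow> real" and B :: real
  assumes indep: "indep_vars (\<lambda>_. borel) X UNIV"
    and bnd: "\<And>i x. x \<in> space M \<Longrightarrow> \<bar>X i x\<bar> \<le> B"
    and B: "B > 0"
    and exp0: "\<And>i. expectation (X i) = 0"
  shows "AE x in M. (\<lambda>n. (\<Sum>i<n. X i x) / real n) \<longlonglongrightarrow> 0"
proof -
  have rv[measurable]: "\<And>i. random_variable borel (X i)" using indep unfolding indep_vars_def by blast
  have hoeff: "prob {x\<in>space M. \<bar>(\<Sum>i<n. X i x)\<bar> \<ge> real n * \<delta>} \<le> 2 * exp (- (real n * \<delta>^2) / (2*B^2))"
    if n: "n > 0" and d: "\<delta> \<ge> 0" for n \<delta>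
  proof -
    interpret H: Hoeffding_ineq M "{..<n}" X "\<lambda>_. -B" "\<lambda>_. B" "\<Sum>i<n. expectation (X i)"
    proof unfold_locales
      show "indep_vars (\<lambda>_. borel) X {..<n}" by (rule indep_vars_subset[OF indep]) auto
      fix i show "AE x in M. X i x \<in> {- B..B}" proof (intro AE_I2) fix x assume "x \<in> space M" from bnd[OF this, of i] show "X i x \<in> {-B..B}" by (simp add: abs_le_iff) qed
    qed auto
    have "prob {x\<in>space M. \<bar>(\<Sum>i<n. X i x) - (\<Sum>i<n. expectation (X i))\<bar> \<ge> real n * \<delta>}
       \<le> 2 * exp (-2 * (real n * \<delta>)\<^sup>2 / (\<Sum>i<n. (B - - B)\<^sup>2))"
      using H.Hoeffding_ineq_abs_ge[of "real n * \<delta>"] n d B by (auto intro: sum_pos)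
    also have "-2 * (real n * \<delta>)\<^sup>2 / (\<Sum>i<n. (B - - B)\<^sup>2) = - (real n * \<delta>^2) / (2*B^2)"
      using n B by (simp add: power2_eq_square field_simps)
    finally show ?thesis by (simp add: exp0)
  qed
  have k: "AE x in M. eventually (\<lambda>n. \<bar>(\<Sum>i<n. X i x)\<bar> < real n * (1 / Suc k)) sequentially" for k :: nat
  proof -
    define \<delta> :: real where "\<delta> = 1 / Suc k"
    define A where "A n = {x\<in>space M. \<bar>(\<Sum>i<n. X i x)\<bar> \<ge> real n * \<delta>}" for n
    define c where "c = \<delta>^2 / (2*B^2)"
    have c: "c > 0" using B by (simp add: c_def \<delta>_def)
    have Am[measurable]: "A n \<in> sets M" for n unfolding A_def by measurable
    have "summable (\<lambda>n. measure M (A n))"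
    proof (rule summable_comparison_test')
      show "summable (\<lambda>n. 2 * exp (-c) ^ n)" using c by (intro summable_mult summable_geometric) auto
      fix n :: nat assume "n \<ge> 1"
      then have "measure M (A n) \<le> 2 * exp (- (real n * \<delta>^2) / (2*B^2))"
        unfolding A_def by (intro hoeff) (auto simp: \<delta>_def)
      also have "\<dots> = 2 * exp (-c) ^ n" by (simp add: c_def exp_of_nat_mult[symmetric])
      finally show "norm (measure M (A n)) \<le> 2 * exp (-c) ^ n" by simp
    qed
    from borel_cantelli_AE1[OF Am _ this] have "AE x in M. eventually (\<lambda>n. x \<in> space M - A n) sequentially"
      by (simp add: less_top[symmetric])
    then show ?thesis
      by (rule eventually_mono) (auto simp: A_def \<delta>_def elim!: eventually_mono)
  qed
  have "AE x in M. \<forall>k::nat. eventually (\<lambda>n. \<bar>(\<Sum>i<n. X i x)\<bar> < real n * (1 / Suc k)) sequentially"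
    using k by (simp add: AE_all_countable)
  then show ?thesis
  proof (rule eventually_mono)
    fix x assume H: "\<forall>k::nat. eventually (\<lambda>n. \<bar>(\<Sum>i<n. X i x)\<bar> < real n * (1 / Suc k)) sequentially"
    show "(\<lambda>n. (\<Sum>i<n. X i x) / real n) \<longlonglongrightarrow> 0"
    proof (rule tendstoI)
      fix e :: real assume "e > 0"
      then obtain k :: nat where ke: "1 / Suc k < e"
        using reals_Archimedean[of e] by (auto simp: inverse_eq_divide)
      show "eventually (\<lambda>n. dist ((\<Sum>i<n. X i x) / real n) 0 < e) sequentially"
        using H[rule_format, of k] eventually_gt_at_top[of 0]
      proof (eventually_elim)
        case (elim n)
        then have "\<bar>(\<Sum>i<n. X i x)\<bar> / real n < 1 / Suc k" by (simp add: field_simps)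
        with ke show ?case by (simp add: abs_divide)
      qed
    qed
  qed
qed

lemma finite_cube: "finite (cube n)"
proof -
  have "cube n = {xs. set xs \<subseteq> {-1,1} \<and> length xs = n}" by (auto simp: cube_def)
  then show ?thesis using finite_lists_length_eq[of "{-1::int,1}" n] by simp
qed

lemma deg_cong: "(\<And>x. x \<in> cube n \<Longrightarrow> f x = f' x) \<Longrightarrow> deg n f = deg n f'"
  unfolding deg_def fourier_def by (simp cong: sum.cong)

lemma deg_le: "deg n f \<le> n"
proof -
  have fin: "finite {S. S \<subseteq> {..<n} \<and> fourier n f S \<noteq> 0}" by (rule finite_subset[of _ "Pow {..<n}"]) auto
  have "\<forall>a\<in>insert 0 (card ` {S. S \<subseteq> {..<n} \<and> fourier n f S \<noteq> 0}). a \<le> n"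
    using card_mono[of "{..<n}"] by fastforce
  then show ?thesis unfolding deg_def using fin by (subst Max_le_iff) auto
qed

lemma finite_Fset: assumes "finite V" shows "finite (Fset V d)"
proof -
  have "inj_on (\<lambda>F. restrict F (cube d)) (Fset V d)"
  proof (rule inj_onI)
    fix F G assume "F \<in> Fset V d" "G \<in> Fset V d" "restrict F (cube d) = restrict G (cube d)"
    then show "F = G" unfolding Fset_def by (auto simp: fun_eq_iff restrict_def split: if_splits) (metis)
  qed
  moreover have "(\<lambda>F. restrict F (cube d)) ` Fset V d \<subseteq> PiE (cube d) (\<lambda>_. V)"
    by (auto simp: Fset_def)
  moreover have "finite (PiE (cube d) (\<lambda>_. V))" using assms finite_cube by (intro finite_PiE) auto
  ultimately show ?thesis by (metis finite_imageD finite_subset)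
qed

lemma Fset_ne: assumes "1 \<in> V" shows "Fset V d \<noteq> {}"
proof -
  have "(\<lambda>x. if x \<in> cube d then 1 else 0) \<in> Fset V d" using assms by (auto simp: Fset_def)
  then show ?thesis by blast
qed

lemma sum_perm:
  assumes T: "bij_betw T (cube d) (cube d)"
  shows "(\<Sum>F\<in>Fset V d. deg d (\<lambda>z. F (inv_into (cube d) T z))) = (\<Sum>F\<in>Fset V d. deg d F)"
proof -
  define P where "P F = (\<lambda>z. if z \<in> cube d then F (inv_into (cube d) T z) else 0)" for F :: "int list \<Rightarrow> real"
  define Q where "Q F = (\<lambda>z. if z \<in> cube d then F (T z) else 0)" for F :: "int list \<Rightarrow> real"
  have inT: "inv_into (cube d) T z \<in> cube d" "T (inv_into (cube d) T z) = z" if "z \<in> cube d" for z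
    using T that by (auto simp: bij_betw_def inv_into_into f_inv_into_f)
  have Tin: "T w \<in> cube d" "inv_into (cube d) T (T w) = w" if "w \<in> cube d" for w
    using T that by (auto simp: bij_betw_def inv_into_f_f)
  have "(\<Sum>F\<in>Fset V d. deg d (\<lambda>z. F (inv_into (cube d) T z))) = (\<Sum>F\<in>Fset V d. deg d (P F))"
    by (intro sum.cong refl deg_cong) (simp add: P_def)
  also have "\<dots> = (\<Sum>F\<in>Fset V d. deg d F)"
  proof (rule sum.reindex_bij_witness[where i=Q and j=P])
    fix F assume F: "F \<in> Fset V d"
    show "Q (P F) = F"
      using F inT Tin by (auto simp: fun_eq_iff P_def Q_def Fset_def)
    show "P F \<in> Fset V d" using F inT by (auto simp: P_def Fset_def)
    show "deg d (P F) = deg d (P F)" by simp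
  next
    fix F assume F: "F \<in> Fset V d"
    show "P (Q F) = F"
      using F inT Tin by (auto simp: fun_eq_iff P_def Q_def Fset_def)
    show "Q F \<in> Fset V d" using F Tin by (auto simp: Q_def Fset_def)
  qed
  finally show ?thesis .
qed

theorem theorem3:
  fixes M :: "'a measure" and d m :: nat and V :: "real set"
    and psi Phi Phi' :: "int list \<Rightarrow> int list"
    and h' :: "nat \<Rightarrow> 'a \<Rightarrow> int list \<Rightarrow> real"
    and g g' :: "'a \<Rightarrow> nat \<Rightarrow> int list \<Rightarrow> real"
  assumes "prob_space M"
    and "1 \<le> d" and "d \<le> m"
    and "finite V" and "{-1, 1} \<subseteq> V"
    and "psi ` cube d \<subseteq> cube m" and "inj_on psi (cube d)"
    and "Phi ` cube m \<subseteq> cube d" and "Phi' ` cube m \<subseteq> cube d"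
    and "bij_betw (Phi \<circ> psi) (cube d) (cube d)"
    and "bij_betw (Phi' \<circ> psi) (cube d) (cube d)"
    and "prob_space.indep_vars M (\<lambda>_. count_space UNIV) h' UNIV"
    and "\<And>i. distr M (count_space UNIV) (h' i) = measure_pmf (pmf_of_set (Fset V d))"
    and "\<And>\<omega> i. (g \<omega> i \<circ> Phi) \<in> Hset m (psi ` cube d) (h' i \<omega> \<circ> inv_into (cube d) psi)"
    and "\<And>\<omega> i. (g' \<omega> i \<circ> Phi') \<in> Hset m (psi ` cube d) (h' i \<omega> \<circ> inv_into (cube d) psi)"
  shows "AE \<omega> in M. (\<lambda>n. (real (degsum d m Phi (g \<omega>) n) - real (degsum d m Phi' (g' \<omega>) n)) / real n)
            \<longlonglongrightarrow> 0"
proof -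
  interpret prob_space M by fact
  note inj = assms(7)
  have gdeg: "deg d (gg \<omega> i) = deg d (\<lambda>z. h' i \<omega> (inv_into (cube d) (P \<circ> psi) z))"
    if bij: "bij_betw (P \<circ> psi) (cube d) (cube d)"
      and H: "(gg \<omega> i \<circ> P) \<in> Hset m (psi ` cube d) (h' i \<omega> \<circ> inv_into (cube d) psi)"
    for gg :: "'a \<Rightarrow> nat \<Rightarrow> int list \<Rightarrow> real" and P \<omega> i
  proof (rule deg_cong)
    fix z assume z: "z \<in> cube d"
    define w where "w = inv_into (cube d) (P \<circ> psi) z"
    have zi: "z \<in> (P \<circ> psi) ` cube d" using bij z by (simp add: bij_betw_def)
    have w1: "w \<in> cube d" unfolding w_def using zi by (rule inv_into_into)
    have "(P \<circ> psi) w = z" unfolding w_def using zi by (rule f_inv_into_f)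
    with w1 have w: "w \<in> cube d" "P (psi w) = z" by auto
    have "gg \<omega> i (P (psi w)) = h' i \<omega> (inv_into (cube d) psi (psi w))"
      using H w(1) by (auto simp: Hset_def)
    also have "inv_into (cube d) psi (psi w) = w" using inj w(1) by (simp add: inv_into_f_f)
    finally show "gg \<omega> i z = h' i \<omega> (inv_into (cube d) (P \<circ> psi) z)"
      using w by (simp add: w_def)
  qed
  define D where "D F = deg d (\<lambda>z. F (inv_into (cube d) (Phi \<circ> psi) z))" for F :: "int list \<Rightarrow> real"
  define D' where "D' F = deg d (\<lambda>z. F (inv_into (cube d) (Phi' \<circ> psi) z))" for F :: "int list \<Rightarrow> real"
  define X where "X i \<omega> = real (D (h' i \<omega>)) - real (D' (h' i \<omega>))" for i \<omega>
  have indep: "indep_vars (\<lambda>_. borel) X UNIV"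
    unfolding X_def
    by (rule indep_vars_compose2[OF assms(12), where Y="\<lambda>i F. real (D F) - real (D' F)"]) auto
  have rvh[measurable]: "h' i \<in> measurable M (count_space UNIV)" for i
    using assms(12) unfolding indep_vars_def by blast
  have bnd: "\<bar>X i x\<bar> \<le> real d" for i x
  proof -
    have "D (h' i x) \<le> d" "D' (h' i x) \<le> d" unfolding D_def D'_def by (rule deg_le)+
    then show ?thesis by (simp add: X_def abs_le_iff)
  qed
  have finF: "finite (Fset V d)" and neF: "Fset V d \<noteq> {}"
    using finite_Fset[OF assms(4)] Fset_ne[of V d] assms(5) by auto
  have exp0: "expectation (X i) = 0" for i
  proof -
    have "expectation (X i) = integral\<^sup>L (distr M (count_space UNIV) (h' i)) (\<lambda>F. real (D F) - real (D' F))"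
      by (subst integral_distr) (auto simp: X_def[abs_def])
    also have "\<dots> = (\<Sum>F\<in>Fset V d. real (D F) - real (D' F)) / card (Fset V d)"
      by (simp add: assms(13) integral_pmf_of_set finF neF)
    also have "(\<Sum>F\<in>Fset V d. real (D F) - real (D' F)) = real (\<Sum>F\<in>Fset V d. D F) - real (\<Sum>F\<in>Fset V d. D' F)"
      by (simp add: sum_subtractf)
    also have "(\<Sum>F\<in>Fset V d. D F) = (\<Sum>F\<in>Fset V d. D' F)"
      unfolding D_def D'_def using sum_perm[OF assms(10)] sum_perm[OF assms(11)] by simp
    finally show ?thesis by simp
  qed
  have lim: "AE x in M. (\<lambda>n. (\<Sum>i<n. X i x) / real n) \<longlonglongrightarrow> 0"
    using assms(2) by (intro slln_bounded[OF indep, of "real d"] bnd exp0) auto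
  define C where "C = real (\<Sum>j<d. deg m (\<lambda>x. real_of_int (Phi x ! j))) - real (\<Sum>j<d. deg m (\<lambda>x. real_of_int (Phi' x ! j)))"
  show ?thesis using lim
  proof (rule eventually_mono)
    fix \<omega> assume L: "(\<lambda>n. (\<Sum>i<n. X i \<omega>) / real n) \<longlonglongrightarrow> 0"
    have eq: "(real (degsum d m Phi (g \<omega>) n) - real (degsum d m Phi' (g' \<omega>) n)) / real n
        = (\<Sum>i<n. X i \<omega>) / real n + C / real n" for n
    proof -
      have "real (degsum d m Phi (g \<omega>) n) - real (degsum d m Phi' (g' \<omega>) n) = (\<Sum>i<n. X i \<omega>) + C"
      proof -
        have G1: "deg d (g \<omega> i) = D (h' i \<omega>)" for i
          unfolding D_def by (rule gdeg[OF assms(10) assms(14)])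
        have G2: "deg d (g' \<omega> i) = D' (h' i \<omega>)" for i
          unfolding D'_def by (rule gdeg[OF assms(11) assms(15)])
        show ?thesis unfolding degsum_def X_def C_def G1 G2
          by (simp add: sum_subtractf)
      qed
      then show ?thesis by (simp add: add_divide_distrib)
    qed
    have "(\<lambda>n. C / real n) \<longlonglongrightarrow> 0"
      by (rule lim_const_over_n)
    from tendsto_add[OF L this] show "(\<lambda>n. (real (degsum d m Phi (g \<omega>) n) - real (degsum d m Phi' (g' \<omega>) n)) / real n) \<longlonglongrightarrow> 0"
      unfolding eq by simp
  qed
qed

end
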